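(* The generating series $f(q;x)=\sum_\gamma q^{\omega_{HU}(\gamma)+\omega_{DH}(\gamma)+\omega_{DU}(\gamma)+\omega_{HH}(\gamma)}x^{|\gamma|}$, where $\gamma$ ranges over all Motzkin paths and $|\gamma|$ is the length, is $$f(q;x)=\frac{1-qx-(1-q)x^2-\sqrt{(1+x)\big(1-(1+2q)x-(1-q^2)x^2+(1-q)^2x^3\big)}}{2qx^2}.$$
   Context: Steps: $U=(1,1)$, $D=(1,-1)$, $H=(1,0)$. A Motzkin path of length $n$ is a lattice path from $(0,0)$ to $(n,0)$ with steps $U,D,H$ never going below the $x$-axis. Paths are identified with words of steps, and $\omega_\alpha(\gamma)$ is the number of occurrences of the word $\alpha$ as a factor (contiguous subword, overlapping occurrences counted separately) of $\gamma$. *)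

theory Defs
  imports Complex_Main "HOL-Computational_Algebra.Formal_Power_Series"
begin

datatype step = U | D | H

fun height :: "step \<Rightarrow> int" where
  "height U = 1" | "height D = -1" | "height H = 0"

definition motzkin :: "step list \<Rightarrow> bool" where
  "motzkin \<gamma> \<longleftrightarrow>
     (\<forall>k\<le>length \<gamma>. 0 \<le> sum_list (map height (take k \<gamma>))) \<and>
     sum_list (map height \<gamma>) = 0"

definition occ :: "step list \<Rightarrow> step list \<Rightarrow> nat" where
  "occ \<alpha> \<gamma> = card {i. i + length \<alpha> \<le> length \<gamma> \<and> take (length \<alpha>) (drop i \<gamma>) = \<alpha>}"

definition stat :: "step list \<Rightarrow> nat" where
  "stat \<gamma> = occ [H,U] \<gamma> + occ [D,H] \<gamma> + occ [D,U] \<gamma> + occ [H,H] \<gamma>"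

definition motz_gf :: "real \<Rightarrow> real fps" where
  "motz_gf q = Abs_fps (\<lambda>n. \<Sum>\<gamma>\<in>{\<gamma>. length \<gamma> = n \<and> motzkin \<gamma>}. q ^ stat \<gamma>)"

text \<open>Formal square root of a power series with constant term 1 (principal branch).\<close>
definition fps_sqrt :: "real fps \<Rightarrow> real fps" where
  "fps_sqrt a = fps_radical (\<lambda>k x. root k x) 2 a"

end

theory Submission imports Defs begin

fun cp :: "step \<Rightarrow> step \<Rightarrow> bool" where
  "cp H U = True" | "cp D H = True" | "cp D U = True" | "cp H H = True" | "cp _ _ = False"

fun cnt :: "step list \<Rightarrow> nat" where
  "cnt (a#b#w) = (if cp a b then 1 else 0) + cnt (b#w)" | "cnt _ = 0"

lemma occ_set_Cons:
  assumes "\<alpha> \<noteq> []"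
  shows "{i. i + length \<alpha> \<le> length (x#w) \<and> take (length \<alpha>) (drop i (x#w)) = \<alpha>}
   = (if length \<alpha> \<le> Suc (length w) \<and> take (length \<alpha>) (x#w) = \<alpha> then {0} else {})
     \<union> Suc ` {i. i + length \<alpha> \<le> length w \<and> take (length \<alpha>) (drop i w) = \<alpha>}"
  (is "?L = ?R")
proof (rule set_eqI)
  fix i show "i \<in> ?L \<longleftrightarrow> i \<in> ?R"
    by (cases i) (auto simp: image_iff)
qed

lemma occ_Cons: "\<alpha> \<noteq> [] \<Longrightarrow> occ \<alpha> (x#w) =
   (if length \<alpha> \<le> Suc (length w) \<and> take (length \<alpha>) (x#w) = \<alpha> then 1 else 0) + occ \<alpha> w"
  unfolding occ_def
  apply (subst occ_set_Cons, assumption)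
  apply (subst card_Un_disjoint)
     apply (auto intro!: finite_imageI finite_subset[of _ "{..length w}"] simp: card_image)
  done

lemma occ_Nil: "\<alpha> \<noteq> [] \<Longrightarrow> occ \<alpha> [] = 0"
  unfolding occ_def by auto

lemma occ2: "occ [x,y] (a#b#w) = (if a = x \<and> b = y then 1 else 0) + occ [x,y] (b#w)"
  by (subst occ_Cons) auto

lemma stat_cnt: "stat w = cnt w"
proof (induction w rule: cnt.induct)
  case (1 a b w)
  then show ?case
    unfolding stat_def occ2 by (cases a; cases b; simp)
next
  case "2_1" then show ?case by (simp add: stat_def occ_Nil)
next
  case ("2_2" v) then show ?case by (simp add: stat_def occ_Cons occ_Nil)
qed

lemma cnt_append: "cnt (xs @ ys) = cnt xs + cnt ys +
   (if xs \<noteq> [] \<and> ys \<noteq> [] \<and> cp (last xs) (hd ys) then 1 else 0)"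
proof (induction xs rule: cnt.induct)
  case (1 a b w) then show ?case by simp
next
  case "2_1" then show ?case by simp
next
  case ("2_2" v) then show ?case by (cases ys) auto
qed

fun nn :: "int \<Rightarrow> step list \<Rightarrow> bool" where
  "nn h [] = True" | "nn h (a#w) = (0 \<le> h + height a \<and> nn (h + height a) w)"

fun ok :: "int \<Rightarrow> step list \<Rightarrow> bool" where
  "ok h [] = (h = 0)" | "ok h (a#w) = (0 \<le> h + height a \<and> ok (h + height a) w)"

lemma all_le_Suc: "(\<forall>k\<le>Suc n. P k) \<longleftrightarrow> P 0 \<and> (\<forall>k\<le>n. P (Suc k))"
  by (metis Suc_le_mono le0 not0_implies_Suc)

lemma ok_gen: "((\<forall>k\<le>length w. 0 \<le> h + sum_list (map height (take k w))) \<and>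
     h + sum_list (map height w) = 0) \<longleftrightarrow> 0 \<le> h \<and> ok h w"
proof (induction w arbitrary: h)
  case Nil then show ?case by auto
next
  case (Cons a w)
  have "((\<forall>k\<le>length (a#w). 0 \<le> h + sum_list (map height (take k (a#w)))) \<and>
     h + sum_list (map height (a#w)) = 0) \<longleftrightarrow> 0 \<le> h \<and>
     ((\<forall>k\<le>length w. 0 \<le> (h + height a) + sum_list (map height (take k w))) \<and>
     (h + height a) + sum_list (map height w) = 0)"
    by (simp only: length_Cons all_le_Suc) (simp add: add.assoc)
  also have "\<dots> \<longleftrightarrow> 0 \<le> h \<and> ok h (a#w)" using Cons by auto
  finally show ?case .
qed

lemma motzkin_ok: "motzkin w \<longleftrightarrow> ok 0 w"
  using ok_gen[of w 0] unfolding motzkin_def by simp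

lemma ok_shift: "ok k \<alpha> \<Longrightarrow> 0 \<le> h \<Longrightarrow> ok (h + k) (\<alpha> @ ys) = ok h ys"
proof (induction \<alpha> arbitrary: k)
  case Nil then show ?case by simp
next
  case (Cons a \<alpha>)
  then show ?case using Cons.IH[of "k + height a"] by (simp add: add.assoc)
qed

lemma ok_nonneg: "ok h w \<Longrightarrow> w \<noteq> [] \<Longrightarrow> 0 \<le> h + height (hd w)"
  by (cases w) auto

lemma ok0_hd: "ok 0 w \<Longrightarrow> w \<noteq> [] \<Longrightarrow> hd w \<noteq> D"
  by (cases w) auto

lemma ok_UD: "ok 0 \<alpha> \<Longrightarrow> ok 0 \<beta> \<Longrightarrow> ok 0 (U # \<alpha> @ D # \<beta>)"
  using ok_shift[of 0 \<alpha> 1 "D#\<beta>"] by simp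

lemma ok_decomp: "ok (h+1) w \<Longrightarrow> 0 \<le> h \<Longrightarrow>
   \<exists>\<alpha> \<beta>. w = \<alpha> @ D # \<beta> \<and> ok 0 \<alpha> \<and> ok h \<beta>"
proof (induction "length w" arbitrary: w h rule: less_induct)
  case less
  show ?case
  proof (cases w)
    case Nil then show ?thesis using less by simp
  next
    case (Cons a w')
    show ?thesis
    proof (cases a)
      case D then show ?thesis using less Cons by (intro exI[of _ "[]"] exI[of _ w']) auto
    next
      case H
      have l1: "length w' < length w" using Cons by simp
      have okw: "ok (h+1) w'" using H less Cons by simp
      obtain \<alpha> \<beta> where ab: "w' = \<alpha> @ D # \<beta>" "ok 0 \<alpha>" "ok h \<beta>"
        using less(1)[OF l1 okw less(3)] by blast
      have "ok 0 (H # \<alpha>)" using ab by simp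
      moreover have "w = (H # \<alpha>) @ D # \<beta>" using Cons H ab by simp
      ultimately show ?thesis using ab by blast
    next
      case U
      have l1: "length w' < length w" using Cons by simp
      have okw: "ok ((h+1)+1) w'" using U less Cons by (simp add: add.assoc)
      have h1: "0 \<le> h+1" using less(3) by simp
      obtain \<alpha>1 \<beta>1 where 1: "w' = \<alpha>1 @ D # \<beta>1" "ok 0 \<alpha>1" "ok (h+1) \<beta>1"
        using less(1)[OF l1 okw h1] by blast
      have l2: "length \<beta>1 < length w" using Cons 1 by simp
      obtain \<alpha>2 \<beta>2 where 2: "\<beta>1 = \<alpha>2 @ D # \<beta>2" "ok 0 \<alpha>2" "ok h \<beta>2"
        using less(1)[OF l2 1(3) less(3)] by blast
      have "ok 0 (U # \<alpha>1 @ D # \<alpha>2)" using ok_UD 1 2 by blast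
      moreover have "w = (U # \<alpha>1 @ D # \<alpha>2) @ D # \<beta>2" using Cons U 1 2 by simp
      ultimately show ?thesis using 2 by blast
    qed
  qed
qed

lemma ok_inj: "ok k \<alpha> \<Longrightarrow> ok k \<alpha>' \<Longrightarrow> \<alpha> @ D # \<beta> = \<alpha>' @ D # \<beta>' \<Longrightarrow> \<alpha> = \<alpha>'"
proof (induction \<alpha> arbitrary: \<alpha>' k)
  case Nil then show ?case by (cases \<alpha>') auto
next
  case (Cons a \<alpha>)
  then show ?case by (cases \<alpha>') auto
qed

lemma finite_UNIV_step: "finite (UNIV :: step set)"
proof -
  have "(UNIV :: step set) = {U, D, H}" by (auto intro: step.exhaust)
  then show ?thesis by (metis finite.emptyI finite_insert)
qed

definition M :: "nat \<Rightarrow> step list set" where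
  "M n = {\<gamma>. length \<gamma> = n \<and> ok 0 \<gamma>}"

lemma finite_M: "finite (M n)"
  unfolding M_def
  by (rule finite_subset[OF _ finite_lists_length_eq[OF finite_UNIV_step, of n]]) auto

definition ff :: "real \<Rightarrow> nat \<Rightarrow> real" where
  "ff q n = (\<Sum>\<gamma>\<in>M n. q ^ cnt \<gamma>)"

definition WW :: "real \<Rightarrow> nat \<Rightarrow> real" where
  "WW q n = (\<Sum>\<gamma>\<in>M n. q ^ (cnt \<gamma> + (if \<gamma> = [] then 0 else 1)))"

lemma M0: "M 0 = {[]}" unfolding M_def by auto

lemma WW_eq: "WW q n = q * ff q n + (if n = 0 then 1 - q else 0)"
proof (cases n)
  case 0 then show ?thesis by (simp add: WW_def ff_def M0)
next
  case (Suc m)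
  have "WW q n = (\<Sum>\<gamma>\<in>M n. q * q ^ cnt \<gamma>)"
    unfolding WW_def by (rule sum.cong) (auto simp: M_def Suc)
  then show ?thesis by (simp add: ff_def sum_distrib_left Suc)
qed

lemma coef: "fps_nth (motz_gf q) n = ff q n"
  unfolding motz_gf_def ff_def M_def by (simp add: stat_cnt motzkin_ok)

lemma cnt_U: "cnt (U # w) = cnt w"
  by (cases w) auto

lemma cnt_H: "ok 0 \<gamma> \<Longrightarrow> cnt (H # \<gamma>) = cnt \<gamma> + (if \<gamma> = [] then 0 else 1)"
proof (cases \<gamma>)
  case (Cons b w)
  assume "ok 0 \<gamma>"
  then have "b \<noteq> D" using Cons by auto
  then show ?thesis using Cons by (cases b) auto
qed simp

lemma cnt_UD: "ok 0 \<beta> \<Longrightarrow> cnt (\<alpha> @ D # \<beta>) = cnt \<alpha> + (cnt \<beta> + (if \<beta> = [] then 0 else 1))"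
proof -
  assume ok: "ok 0 \<beta>"
  have a: "cnt (\<alpha> @ [D]) = cnt \<alpha>"
    using cnt_append[of \<alpha> "[D]"] by (cases "last \<alpha>") auto
  have "cp D (hd \<beta>)" if "\<beta> \<noteq> []"
    using ok0_hd[OF ok that] by (cases "hd \<beta>") auto
  then show ?thesis
    using cnt_append[of "\<alpha> @ [D]" \<beta>] a by auto
qed

definition T :: "nat \<Rightarrow> step list set" where
  "T n = {w. length w = n \<and> ok 1 w}"

lemma T_eq: "T n = (\<lambda>(i,(\<alpha>,\<beta>)). \<alpha> @ D # \<beta>) ` (SIGMA i:{..<n}. M i \<times> M (n-1-i))"
proof (rule set_eqI)
  fix w
  show "w \<in> T n \<longleftrightarrow> w \<in> (\<lambda>(i,(\<alpha>,\<beta>)). \<alpha> @ D # \<beta>) ` (SIGMA i:{..<n}. M i \<times> M (n-1-i))"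
  proof
    assume "w \<in> T n"
    then have "ok (0+1) w" "length w = n" by (auto simp: T_def)
    then obtain \<alpha> \<beta> where ab: "w = \<alpha> @ D # \<beta>" "ok 0 \<alpha>" "ok 0 \<beta>"
      using ok_decomp[of 0 w] by auto
    then show "w \<in> (\<lambda>(i,(\<alpha>,\<beta>)). \<alpha> @ D # \<beta>) ` (SIGMA i:{..<n}. M i \<times> M (n-1-i))"
      using \<open>length w = n\<close>
      by (intro image_eqI[of _ _ "(length \<alpha>, (\<alpha>, \<beta>))"]) (auto simp: M_def)
  next
    assume "w \<in> (\<lambda>(i,(\<alpha>,\<beta>)). \<alpha> @ D # \<beta>) ` (SIGMA i:{..<n}. M i \<times> M (n-1-i))"
    then obtain i \<alpha> \<beta> where "i < n" "\<alpha> \<in> M i" "\<beta> \<in> M (n-1-i)" "w = \<alpha> @ D # \<beta>"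
      by auto
    then show "w \<in> T n"
      using ok_shift[of 0 \<alpha> 1 "D#\<beta>"] by (auto simp: M_def T_def)
  qed
qed

lemma inj_T: "inj_on (\<lambda>(i,(\<alpha>,\<beta>)). \<alpha> @ D # \<beta>) (SIGMA i:{..<n}. M i \<times> M (n-1-i))"
proof (rule inj_onI)
  fix x y
  assume x: "x \<in> (SIGMA i:{..<n}. M i \<times> M (n-1-i))"
     and y: "y \<in> (SIGMA i:{..<n}. M i \<times> M (n-1-i))"
     and e0: "(\<lambda>(i,(\<alpha>,\<beta>)). \<alpha> @ D # \<beta>) x = (\<lambda>(i,(\<alpha>,\<beta>)). \<alpha> @ D # \<beta>) y"
  obtain i \<alpha> \<beta> where xd: "x = (i, \<alpha>, \<beta>)" by (cases x) auto
  obtain i' \<alpha>' \<beta>' where yd: "y = (i', \<alpha>', \<beta>')" by (cases y) auto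
  have e: "\<alpha> @ D # \<beta> = \<alpha>' @ D # \<beta>'" using e0 xd yd by simp
  have "ok 0 \<alpha>" "ok 0 \<alpha>'" "length \<alpha> = i" "length \<alpha>' = i'" using x y xd yd by (auto simp: M_def)
  moreover then have "\<alpha> = \<alpha>'" using ok_inj e by blast
  ultimately show "x = y" using e xd yd by simp
qed

lemma M_Suc: "M (Suc n) = Cons H ` M n \<union> Cons U ` T n"
proof (rule set_eqI)
  fix w show "w \<in> M (Suc n) \<longleftrightarrow> w \<in> Cons H ` M n \<union> Cons U ` T n"
  proof (cases w)
    case Nil then show ?thesis by (auto simp: M_def)
  next
    case (Cons a w')
    then show ?thesis by (cases a) (auto simp: M_def T_def)
  qed
qed

lemma ff_Suc: "ff q (Suc n) = WW q n + (\<Sum>i<n. ff q i * WW q (n-1-i))"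
proof -
  have fT: "finite (T n)" unfolding T_eq by (auto simp: finite_M)
  have "ff q (Suc n) = (\<Sum>\<gamma>\<in>Cons H ` M n. q ^ cnt \<gamma>) + (\<Sum>\<gamma>\<in>Cons U ` T n. q ^ cnt \<gamma>)"
    unfolding ff_def M_Suc
    by (rule sum.union_disjoint) (auto simp: finite_M fT)
  also have "(\<Sum>\<gamma>\<in>Cons H ` M n. q ^ cnt \<gamma>) = WW q n"
    by (subst sum.reindex) (auto simp: WW_def cnt_H M_def intro!: sum.cong)
  also have "(\<Sum>\<gamma>\<in>Cons U ` T n. q ^ cnt \<gamma>) = (\<Sum>w\<in>T n. q ^ cnt w)"
    by (subst sum.reindex) (auto simp: cnt_U)
  also have "\<dots> = (\<Sum>x\<in>(SIGMA i:{..<n}. M i \<times> M (n-1-i)).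
        q ^ cnt ((\<lambda>(i,(\<alpha>,\<beta>)). \<alpha> @ D # \<beta>) x))"
    unfolding T_eq by (rule sum.reindex[OF inj_T, unfolded comp_def])
  also have "\<dots> = (\<Sum>(i,p)\<in>(SIGMA i:{..<n}. M i \<times> M (n-1-i)).
        q ^ cnt (fst p) * q ^ (cnt (snd p) + (if snd p = [] then 0 else 1)))"
    by (rule sum.cong) (auto simp: M_def cnt_UD power_add)
  also have "\<dots> = (\<Sum>i<n. \<Sum>p\<in>M i \<times> M (n-1-i).
        q ^ cnt (fst p) * q ^ (cnt (snd p) + (if snd p = [] then 0 else 1)))"
    by (rule sum.Sigma[symmetric]) (auto simp: finite_M)
  also have "\<dots> = (\<Sum>i<n. ff q i * WW q (n-1-i))"
    unfolding ff_def WW_def sum_product sum.cartesian_product by (simp add: case_prod_beta)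
  finally show ?thesis .
qed

lemma ff0: "ff q 0 = 1" by (simp add: ff_def M0)

lemma rec_eq:
  fixes q :: real
  defines "F \<equiv> motz_gf q" and "G \<equiv> fps_const q * motz_gf q + 1 - fps_const q"
  shows "F = 1 + fps_X * G + fps_X * (fps_X * (F * G))"
proof (rule fps_ext)
  fix n
  have Wf: "fps_nth G k = WW q k" for k
    by (simp add: WW_eq coef G_def)
  have Fc: "fps_nth F k = ff q k" for k by (simp add: F_def coef)
  show "fps_nth F n = fps_nth (1 + fps_X * G + fps_X * (fps_X * (F * G))) n"
  proof (cases n)
    case 0 then show ?thesis by (simp add: Fc ff0)
  next
    case (Suc m)
    have "fps_nth (fps_X * (F * G)) m = (\<Sum>i<m. ff q i * WW q (m-1-i))"
    proof (cases m)
      case 0 then show ?thesis by simp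
    next
      case (Suc k)
      have "{0..k} = {..<Suc k}" by auto
      moreover have "fps_nth (F * G) k = (\<Sum>i=0..k. fps_nth F i * fps_nth G (k-i))"
        by (rule fps_mult_nth)
      ultimately show ?thesis using Suc by (simp add: Wf Fc)
    qed
    then show ?thesis using Suc by (simp add: Wf Fc ff_Suc)
  qed
qed

theorem mainTheorem7:
  fixes q :: real
  shows "fps_const (2 * q) * fps_X ^ 2 * motz_gf q =
    1 - fps_const q * fps_X - fps_const (1 - q) * fps_X ^ 2
    - fps_sqrt ((1 + fps_X) *
        (1 - fps_const (1 + 2 * q) * fps_X - fps_const (1 - q ^ 2) * fps_X ^ 2
           + fps_const ((1 - q) ^ 2) * fps_X ^ 3))"
proof -
  define F where "F = motz_gf q"
  define Q :: "real fps" where "Q = fps_const q"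
  define X :: "real fps" where "X = fps_X"
  have c1: "fps_const (2 * q) = 2 * Q" by (simp add: Q_def numeral_fps_const flip: fps_const_1_eq_1)
  have c2: "fps_const (1 - q) = 1 - Q" by (simp add: Q_def numeral_fps_const flip: fps_const_1_eq_1)
  have c3: "fps_const (1 + 2 * q) = 1 + 2 * Q" by (simp add: Q_def numeral_fps_const flip: fps_const_1_eq_1)
  have c4: "fps_const (1 - q ^ 2) = 1 - Q ^ 2" unfolding Q_def fps_const_power by (rule fps_ext) simp
  have c5: "fps_const ((1 - q) ^ 2) = (1 - Q) ^ 2" unfolding c2[symmetric] fps_const_power ..
  have rec: "F = 1 + X * (Q * F + 1 - Q) + X * (X * (F * (Q * F + 1 - Q)))"
    using rec_eq[of q] unfolding F_def Q_def X_def .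
  define S where "S = 1 - Q * X - (1 - Q) * X ^ 2 - 2 * Q * X ^ 2 * F"
  define Dc where "Dc = (1 + X) * (1 - (1 + 2 * Q) * X - (1 - Q ^ 2) * X ^ 2 + (1 - Q) ^ 2 * X ^ 3)"
  have sq: "S ^ 2 = Dc"
    unfolding S_def Dc_def using rec by algebra
  have S0: "fps_nth S 0 = 1" unfolding S_def X_def Q_def by simp
  have D0: "fps_nth Dc 0 = 1" using S0 unfolding sq[symmetric] power2_eq_square by simp
  have "S ^ Suc 1 = Dc \<longleftrightarrow> S = fps_radical (\<lambda>k x. root k x) (Suc 1) Dc"
    by (rule radical_unique) (simp_all add: D0 S0)
  then have "fps_sqrt Dc = S" using sq unfolding fps_sqrt_def by (simp add: numeral_2_eq_2)
  then show ?thesis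
    unfolding c1 c2 c3 c4 c5 F_def[symmetric] Q_def[symmetric] X_def[symmetric] Dc_def[symmetric]
    unfolding S_def by (simp add: algebra_simps)
qed

end
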